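(* For every complex number $q$ with $0<|q|<1$, \[ \sum_{k=1}^{\infty}(-1)^kq^{k^2}[4k+1]\frac{(q;q^2)_k^3}{(q^2;q^2)_k^3}\sum_{i=1}^{2k}(-1)^i\frac{q^i}{[i]^2} =\frac{(q,q^3;q^2)_{\infty}}{(q^2;q^2)_{\infty}^2}\sum_{j=1}^{\infty}\frac{q^{2j}}{[2j]^2}. \]
   Context: For complex $x,q$ with $|q|<1$: $(x;q)_\infty=\prod_{i\ge 0}(1-xq^i)$ and, for an integer $n\ge 0$, $(x;q)_n=\prod_{i=0}^{n-1}(1-xq^i)$ (equivalently $(x;q)_\infty/(xq^n;q)_\infty$). Multiple arguments mean products: $(x_1,\dots,x_r;q)_m=(x_1;q)_m\cdots(x_r;q)_m$ for $m$ a nonnegative integer or $\infty$. The $q$-integer is $[n]=1+q+\cdots+q^{n-1}=(1-q^n)/(1-q)$. *)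

theory Defs
  imports "HOL-Analysis.Analysis"
begin

definition qpoch :: "complex \<Rightarrow> complex \<Rightarrow> nat \<Rightarrow> complex" where
  "qpoch x q n = (\<Prod>i<n. 1 - x * q ^ i)"

definition qpoch_inf :: "complex \<Rightarrow> complex \<Rightarrow> complex" where
  "qpoch_inf x q = (\<Prod>i. 1 - x * q ^ i)"

definition qint :: "complex \<Rightarrow> nat \<Rightarrow> complex" where
  "qint q n = (\<Sum>i<n. q ^ i)"

end

theory Submission
  imports Defs
begin

definition EE :: "complex \<Rightarrow> complex \<Rightarrow> nat \<Rightarrow> complex" where
  "EE q u m = (1 - q^m)^2 - q^m * u"
definition sg :: "complex \<Rightarrow> complex \<Rightarrow> complex \<Rightarrow> nat \<Rightarrow> complex" where
  "sg q u N i = - (q^(2*i+1)) * (1 - q^(2*i+1)) * EE q u (2*i+1) / ((1 - q^(2*i+2)) * (1 - N*q^(2*i+3)) * EE q u (2*i+2))"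
definition tau :: "complex \<Rightarrow> complex \<Rightarrow> complex \<Rightarrow> nat \<Rightarrow> complex" where
  "tau q u N k = (\<Prod>i<k. sg q u N i)"
definition nu :: "complex \<Rightarrow> complex \<Rightarrow> nat \<Rightarrow> complex" where
  "nu q N k = (\<Prod>i<k. 1 - N / q^(2*i))"
definition TT :: "complex \<Rightarrow> complex \<Rightarrow> complex \<Rightarrow> nat \<Rightarrow> complex" where
  "TT q u N k = (1 - q^(4*k+1))/(1-q) * tau q u N k * nu q N k"
definition gm :: "complex \<Rightarrow> complex \<Rightarrow> complex \<Rightarrow> complex" where
  "gm q u N = (1 - q^3*N)*(1 - q*N) / ((1 - q^2*N)^2 - q^2*N*u)"
definition hh :: "complex \<Rightarrow> complex \<Rightarrow> complex \<Rightarrow> nat \<Rightarrow> complex" where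
  "hh q u N k = q*N*(1 - q^(2*k+1))*EE q u (2*k+1) / ((1-q*N)*(1-q)*(1 - N*q^(2*k+3))) * tau q u N k * nu q N k"

lemma poly_core:
  fixes q K N u :: complex
  shows "K*(1-q^5*K^2)*(1-q^2*N)*((1-q^2*N)^2-q^2*N*u) - (1-q^5*K^2)*(1-q*N)*(1-q^5*N*K)*(K-N)
          - q*N*(1-q^3*K)*((1-q^3*K)^2-q^3*K*u)*(K-N) = N*(1-q^5*N*K)*(1-q^2*K)*((1-q^2*K)^2-q^2*K*u)"
  by algebra

lemma core_step1:
  fixes K N s eN e3 d1 d2 d3 d5 a b c :: complex
  assumes "K \<noteq> 0" "d5 \<noteq> 0" "eN \<noteq> 0" "d3 \<noteq> 0" "d2 \<noteq> 0" "d1 \<noteq> 0"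
  shows "a/d1 * s * (d3/d5) * b / (d3*d2/eN)
         - a/d1 * s * (1 - N/K)
         - c*e3/(d2*d1*d5) * s * (1 - N/K)
       = s * (K*a*b*eN - a*d2*d5*(K-N) - c*e3*(K-N)) / (K*(d1*d2*d5))"
  using assms by (simp add: field_simps)

lemma core_step2:
  fixes K N e1 e2 d1 d2 d5 d6 d7 q a :: complex
  assumes "K \<noteq> 0" "d5 \<noteq> 0" "d2 \<noteq> 0" "d1 \<noteq> 0" "d6 \<noteq> 0" "d7 \<noteq> 0" "e2 \<noteq> 0"
  shows "(- (q*K)*a*e1/(d6*d7*e2)) * (N*d5*d6*e2) / (K*(d1*d2*d5)) = - (q*N*a*e1/(d2*d1*d7))"
  using assms by (simp add: field_simps)

lemma core0:
  fixes q K N u :: complex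
  assumes "K \<noteq> 0" "1 - q^5*N*K \<noteq> 0" "(1-q^2*N)^2-q^2*N*u \<noteq> 0" "1 - q^3*N \<noteq> 0" "1 - q*N \<noteq> 0"
    "1 - q \<noteq> 0" "1 - q^2*K \<noteq> 0" "1 - q^3*N*K \<noteq> 0" "(1-q^2*K)^2-q^2*K*u \<noteq> 0"
  defines "s \<equiv> - (q*K)*(1-q*K)*((1-q*K)^2-q*K*u)/((1-q^2*K)*(1-q^3*N*K)*((1-q^2*K)^2-q^2*K*u))"
  shows "(1-q^5*K^2)/(1-q) * s * ((1-q^3*N)/(1-q^5*N*K)) * (1-q^2*N) / ((1-q^3*N)*(1-q*N)/((1-q^2*N)^2-q^2*N*u))
         - (1-q^5*K^2)/(1-q) * s * (1 - N/K)
       = (q*N*(1-q^3*K))*((1-q^3*K)^2-q^3*K*u)/((1-q*N)*(1-q)*(1-q^5*N*K)) * s * (1 - N/K)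
         - q*N*(1-q*K)*((1-q*K)^2-q*K*u)/((1-q*N)*(1-q)*(1-q^3*N*K))"
proof -
  have 1: "(1-q^5*K^2)/(1-q) * s * ((1-q^3*N)/(1-q^5*N*K)) * (1-q^2*N) / ((1-q^3*N)*(1-q*N)/((1-q^2*N)^2-q^2*N*u))
         - (1-q^5*K^2)/(1-q) * s * (1 - N/K)
         - (q*N*(1-q^3*K))*((1-q^3*K)^2-q^3*K*u)/((1-q*N)*(1-q)*(1-q^5*N*K)) * s * (1 - N/K)
      = s * (K*(1-q^5*K^2)*(1-q^2*N)*((1-q^2*N)^2-q^2*N*u) - (1-q^5*K^2)*(1-q*N)*(1-q^5*N*K)*(K-N)
          - (q*N*(1-q^3*K))*((1-q^3*K)^2-q^3*K*u)*(K-N)) / (K*((1-q)*(1-q*N)*(1-q^5*N*K)))"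
    by (rule core_step1) (use assms in auto)
  also have "\<dots> = s * (N*(1-q^5*N*K)*(1-q^2*K)*((1-q^2*K)^2-q^2*K*u)) / (K*((1-q)*(1-q*N)*(1-q^5*N*K)))"
    using poly_core[of K q N u] by (simp add: mult.assoc)
  also have "\<dots> = - (q*N*(1-q*K)*((1-q*K)^2-q*K*u)/((1-q*N)*(1-q)*(1-q^3*N*K)))"
    unfolding s_def by (rule core_step2) (use assms in auto)
  finally show ?thesis by (simp add: algebra_simps)
qed


lemma pow_norm_lt1: "norm (q::complex) < 1 \<Longrightarrow> 0 < m \<Longrightarrow> norm (q^m) < 1"
  by (simp add: norm_power power_less_one_iff)

lemma pow_ne1: "norm (q::complex) < 1 \<Longrightarrow> 0 < m \<Longrightarrow> 1 - q^m \<noteq> 0"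
  using pow_norm_lt1[of q m] by auto

lemma Npow_ne1: "norm (q::complex) < 1 \<Longrightarrow> norm (N::complex) \<le> 1 \<Longrightarrow> 0 < m \<Longrightarrow> 1 - N*q^m \<noteq> 0"
proof -
  assume a: "norm q < 1" "norm N \<le> 1" "0 < m"
  have "norm (q^m) < 1" using pow_norm_lt1 a by blast
  then have "norm N * norm (q^m) < 1"
  proof -
    have "norm N * norm (q^m) \<le> 1 * norm (q^m)" by (rule mult_right_mono) (use a(2) in auto)
    then show ?thesis using \<open>norm (q^m) < 1\<close> by simp
  qed
  then have "norm (N*q^m) < 1" by (simp add: norm_mult)
  then show ?thesis by auto
qed

lemma tau_Suc: "tau q u N (Suc k) = tau q u N k * sg q u N k"
  by (simp add: tau_def)

lemma nu_Suc: "nu q N (Suc k) = nu q N k * (1 - N / q^(2*k))"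
  by (simp add: nu_def)

lemma nu_shift:
  assumes "q \<noteq> 0"
  shows "nu q (q^2*N) (Suc j) = (1 - q^2*N) * nu q N j"
proof (induction j)
  case 0 then show ?case by (simp add: nu_def)
next
  case (Suc j)
  have e: "q^2*N / q^(2*Suc j) = N / q^(2*j)"
    using assms by (simp add: power_add power2_eq_square field_simps)
  have "nu q (q^2*N) (Suc (Suc j)) = nu q (q^2*N) (Suc j) * (1 - q^2*N / q^(2*Suc j))"
    by (rule nu_Suc)
  also have "\<dots> = (1 - q^2*N) * nu q N j * (1 - N / q^(2*j))" by (simp only: e Suc)
  also have "\<dots> = (1 - q^2*N) * nu q N (Suc j)" by (simp add: nu_Suc)
  finally show ?case .
qed

lemma tau_shift:
  assumes q: "q \<noteq> 0" "norm q < 1" and N: "norm N \<le> 1" and E: "\<And>m. 0 < m \<Longrightarrow> EE q u m \<noteq> 0"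
  shows "tau q u (q^2*N) k = tau q u N k * (1 - q^3*N) / (1 - q^(2*k+3)*N)"
proof (induction k)
  case 0
  have "1 - N*q^3 \<noteq> 0" using Npow_ne1[OF q(2) N, of 3] by simp
  then show ?case by (simp add: tau_def mult.commute)
next
  case (Suc k)
  have n1: "1 - N*q^(2*k+3) \<noteq> 0" using Npow_ne1[OF q(2) N, of "2*k+3"] by simp
  have N2: "norm (q^2*N) \<le> 1"
  proof -
    have "norm (q^2) \<le> 1" using q(2) by (simp add: norm_power power_le_one)
    then show ?thesis using N by (simp add: norm_mult mult_le_one)
  qed
  have n2: "1 - (q^2*N)*q^(2*k+3) \<noteq> 0" using Npow_ne1[OF q(2) N2, of "2*k+3"] by simp
  have n3: "1 - q^(2*k+2) \<noteq> 0" using pow_ne1[OF q(2), of "2*k+2"] by simp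
  have e: "EE q u (2*k+2) \<noteq> 0" using E by simp
  have sg: "sg q u (q^2*N) k = sg q u N k * (1 - N*q^(2*k+3)) / (1 - q^(2*k+5)*N)"
  proof -
    have x: "q^(2*k+5)*N = (q^2*N)*q^(2*k+3)" by (simp add: power_add)
    have g: "\<And>a b c c' e :: complex. c \<noteq> 0 \<Longrightarrow> c' \<noteq> 0 \<Longrightarrow> a/(b*c*e) = a/(b*c'*e) * c' / c"
      by (simp add: field_simps)
    show ?thesis unfolding sg_def x by (rule g) (use n1 n2 in auto)
  qed
  have "tau q u (q^2*N) (Suc k) = tau q u N k * (1 - q^3*N) / (1 - q^(2*k+3)*N) * (sg q u N k * (1 - N*q^(2*k+3)) / (1 - q^(2*k+5)*N))"
    by (simp add: tau_Suc sg Suc)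
  also have "\<dots> = tau q u N k * sg q u N k * (1 - q^3*N) / (1 - q^(2*Suc k+3)*N)"
  proof -
    have g: "\<And>x y z c c' w :: complex. c \<noteq> 0 \<Longrightarrow> c' = c \<Longrightarrow> x*y/c*(z*c'/w) = x*z*y/w"
      by (simp add: field_simps)
    have e: "2*Suc k+3 = 2*k+5" by simp
    show ?thesis unfolding e by (rule g) (use n1 in \<open>auto simp: mult.commute\<close>)
  qed
  finally show ?case by (simp add: tau_Suc)
qed

lemma wz0:
  assumes q: "q \<noteq> 0" "norm q < 1" and N: "norm N \<le> 1"
    and EN: "(1 - q^2*N)^2 - q^2*N*u \<noteq> 0"
  shows "TT q u (q^2*N) 0 / gm q u N - TT q u N 0 = hh q u N 0"
proof -
  have a: "1 - q \<noteq> 0" using pow_ne1[OF q(2), of 1] by simp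
  have b: "1 - N*q \<noteq> 0" using Npow_ne1[OF q(2) N, of 1] by simp
  have c: "1 - N*q^3 \<noteq> 0" using Npow_ne1[OF q(2) N, of 3] by simp
  have b': "1 - q*N \<noteq> 0" using b by (simp add: mult.commute)
  have c': "1 - q^3*N \<noteq> 0" using c by (simp add: mult.commute)
  have "TT q u (q^2*N) 0 / gm q u N - TT q u N 0 = ((1 - q^2*N)^2 - q^2*N*u) / ((1 - q^3*N)*(1 - q*N)) - 1"
    using a by (simp add: TT_def tau_def nu_def gm_def)
  also have "\<dots> = (((1 - q^2*N)^2 - q^2*N*u) - 1 * ((1 - q^3*N)*(1 - q*N))) / ((1 - q^3*N)*(1 - q*N))"
    by (rule divide_diff_eq_iff) (use b' c' in simp)
  also have "\<dots> = q*N*((1 - q)^2 - q*u) / ((1 - q*N)*(1 - q^3*N))"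
  proof -
    have "((1 - q^2*N)^2 - q^2*N*u) - 1 * ((1 - q^3*N)*(1 - q*N)) = q*N*((1 - q)^2 - q*u)"
      by algebra
    then show ?thesis by (simp add: mult.commute)
  qed
  also have "\<dots> = (q*N*((1-q)^2-q*u)) * (1-q) / (((1-q*N)*(1-q^3*N)) * (1-q))"
    using a by simp
  also have "\<dots> = hh q u N 0"
    by (simp add: hh_def tau_def nu_def EE_def mult_ac)
  finally show ?thesis .
qed

lemma wzS:
  assumes q: "q \<noteq> 0" "norm q < 1" and N: "norm N \<le> 1" and E: "\<And>m. 0 < m \<Longrightarrow> EE q u m \<noteq> 0"
    and EN: "(1 - q^2*N)^2 - q^2*N*u \<noteq> 0"
  shows "TT q u (q^2*N) (Suc j) / gm q u N - TT q u N (Suc j) = hh q u N (Suc j) - hh q u N j"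
proof -
  define K where "K = q^(2*j)"
  define Tj where "Tj = tau q u N j"
  define Vj where "Vj = nu q N j"
  define sj where "sj = sg q u N j"
  have K0: "K \<noteq> 0" using q by (simp add: K_def)
  have e1: "q^(2*j+1) = q*K" by (simp add: K_def)
  have e2: "q^(2*j+2) = q^2*K" proof -
    have "q^(2*j+2) = q^(2*j) * q^2" by (simp add: power_add[symmetric])
    then show ?thesis by (simp add: K_def mult.commute)
  qed
  have e3: "q^(2*j+3) = q^3*K" proof -
    have "q^(2*j+3) = q^(2*j) * q^3" by (simp add: power_add[symmetric])
    then show ?thesis by (simp add: K_def mult.commute)
  qed
  have e3': "q^(2*Suc j+1) = q^3*K" proof -
    have "q^(2*Suc j+1) = q^(2*j) * q^3" by (simp add: power_add[symmetric] numeral_3_eq_3)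
    then show ?thesis by (simp add: K_def mult.commute)
  qed
  have e5: "q^(2*Suc j+3) = q^5*K" proof -
    have x: "2*Suc j+3 = 2*j+5" by simp
    have "q^(2*Suc j+3) = q^(2*j) * q^5" by (simp only: x power_add)
    then show ?thesis by (simp add: K_def mult.commute)
  qed
  have e4: "q^(4*Suc j+1) = q^5*K^2"
  proof -
    have x: "4*Suc j+1 = 5 + (2*j + 2*j)" by simp
    have "q^(4*Suc j+1) = q^5 * (q^(2*j)*q^(2*j))" by (simp only: x power_add)
    then show ?thesis by (simp add: K_def power2_eq_square)
  qed
  have a: "1 - q \<noteq> 0" using pow_ne1[OF q(2), of 1] by simp
  have b: "1 - q*N \<noteq> 0" using Npow_ne1[OF q(2) N, of 1] by (simp add: mult.commute)
  have c: "1 - q^3*N \<noteq> 0" using Npow_ne1[OF q(2) N, of 3] by (simp add: mult.commute)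
  have "1 - N*q^(2*Suc j+3) \<noteq> 0" by (rule Npow_ne1[OF q(2) N]) simp
  then have d: "1 - q^5*N*K \<noteq> 0" unfolding e5 by (simp add: mult_ac)
  have "1 - N*q^(2*j+3) \<noteq> 0" by (rule Npow_ne1[OF q(2) N]) simp
  then have d3: "1 - q^3*N*K \<noteq> 0" unfolding e3 by (simp add: mult_ac)
  have "1 - q^(2*j+2) \<noteq> 0" by (rule pow_ne1[OF q(2)]) simp
  then have f: "1 - q^2*K \<noteq> 0" unfolding e2 .
  have "EE q u (2*j+2) \<noteq> 0" by (rule E) simp
  then have g: "(1-q^2*K)^2 - q^2*K*u \<noteq> 0" unfolding EE_def e2 .
  have sK: "sj = - (q*K)*(1-q*K)*((1-q*K)^2-q*K*u)/((1-q^2*K)*(1-q^3*N*K)*((1-q^2*K)^2-q^2*K*u))"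
    unfolding sj_def sg_def EE_def e1 e2 e3 by (simp add: mult_ac)
  have core: "(1-q^5*K^2)/(1-q) * sj * ((1-q^3*N)/(1-q^5*N*K)) * (1-q^2*N) / ((1-q^3*N)*(1-q*N)/((1-q^2*N)^2-q^2*N*u))
         - (1-q^5*K^2)/(1-q) * sj * (1 - N/K)
       = (q*N*(1-q^3*K))*((1-q^3*K)^2-q^3*K*u)/((1-q*N)*(1-q)*(1-q^5*N*K)) * sj * (1 - N/K)
         - q*N*(1-q*K)*((1-q*K)^2-q*K*u)/((1-q*N)*(1-q)*(1-q^3*N*K))"
    unfolding sK by (rule core0) (use K0 d EN c b a f d3 g in auto)
  have L1: "TT q u (q^2*N) (Suc j) = (1-q^5*K^2)/(1-q) * (Tj* sj*(1-q^3*N)/(1-q^5*K*N)) * ((1-q^2*N)*Vj)"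
  proof -
    have t: "tau q u (q^2*N) (Suc j) = tau q u N (Suc j) * (1-q^3*N)/(1-q^(2*Suc j+3)*N)"
      by (rule tau_shift[OF q N E])
    have n: "nu q (q^2*N) (Suc j) = (1 - q^2*N) * nu q N j" by (rule nu_shift[OF q(1)])
    show ?thesis unfolding TT_def t n e4 e5 by (simp add: Tj_def Vj_def sj_def tau_Suc)
  qed
  have L2: "TT q u N (Suc j) = (1-q^5*K^2)/(1-q) * (Tj* sj) * (Vj*(1-N/K))"
    unfolding TT_def e4 by (simp add: Tj_def Vj_def sj_def tau_Suc nu_Suc K_def)
  have L3: "hh q u N (Suc j) = q*N*(1-q^3*K)*((1-q^3*K)^2-q^3*K*u)/((1-q*N)*(1-q)*(1-q^5*N*K)) * (Tj* sj)*(Vj*(1-N/K))"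
    unfolding hh_def EE_def e3' e5 by (simp add: Tj_def Vj_def sj_def tau_Suc nu_Suc K_def mult_ac)
  have L4: "hh q u N j = q*N*(1-q*K)*((1-q*K)^2-q*K*u)/((1-q*N)*(1-q)*(1-q^3*N*K)) * Tj * Vj"
    unfolding hh_def EE_def e1 e3 by (simp add: Tj_def Vj_def mult_ac)
  have G: "gm q u N = (1-q^3*N)*(1-q*N)/((1-q^2*N)^2-q^2*N*u)" by (simp add: gm_def)
  show ?thesis
    unfolding L1 L2 L3 L4 G
  proof -
    have "(1-q^5*K^2)/(1-q) * (Tj* sj*(1-q^3*N)/(1-q^5*K*N)) * ((1-q^2*N)*Vj) / ((1-q^3*N)*(1-q*N)/((1-q^2*N)^2-q^2*N*u))
        - (1-q^5*K^2)/(1-q) * (Tj* sj) * (Vj*(1-N/K))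
       = Tj*Vj*((1-q^5*K^2)/(1-q) * sj * ((1-q^3*N)/(1-q^5*N*K)) * (1-q^2*N) / ((1-q^3*N)*(1-q*N)/((1-q^2*N)^2-q^2*N*u))
         - (1-q^5*K^2)/(1-q) * sj * (1 - N/K))"
      by (simp add: algebra_simps)
    also have "\<dots> = Tj*Vj*((q*N*(1-q^3*K))*((1-q^3*K)^2-q^3*K*u)/((1-q*N)*(1-q)*(1-q^5*N*K)) * sj * (1 - N/K)
         - q*N*(1-q*K)*((1-q*K)^2-q*K*u)/((1-q*N)*(1-q)*(1-q^3*N*K)))" by (simp only: core)
    also have "\<dots> = q*N*(1-q^3*K)*((1-q^3*K)^2-q^3*K*u)/((1-q*N)*(1-q)*(1-q^5*N*K)) * (Tj* sj)*(Vj*(1-N/K))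
         - q*N*(1-q*K)*((1-q*K)^2-q*K*u)/((1-q*N)*(1-q)*(1-q^3*N*K)) * Tj * Vj"
      by (simp add: algebra_simps)
    finally show "(1-q^5*K^2)/(1-q) * (Tj* sj*(1-q^3*N)/(1-q^5*K*N)) * ((1-q^2*N)*Vj) / ((1-q^3*N)*(1-q*N)/((1-q^2*N)^2-q^2*N*u))
        - (1-q^5*K^2)/(1-q) * (Tj* sj) * (Vj*(1-N/K))
       = q*N*(1-q^3*K)*((1-q^3*K)^2-q^3*K*u)/((1-q*N)*(1-q)*(1-q^5*N*K)) * (Tj* sj)*(Vj*(1-N/K))
         - q*N*(1-q*K)*((1-q*K)^2-q*K*u)/((1-q*N)*(1-q)*(1-q^3*N*K)) * Tj * Vj" .
  qed
qed

lemma wz: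
  assumes q: "q \<noteq> 0" "norm q < 1" and N: "norm N \<le> 1" and E: "\<And>m. 0 < m \<Longrightarrow> EE q u m \<noteq> 0"
    and EN: "(1 - q^2*N)^2 - q^2*N*u \<noteq> 0"
  shows "(\<Sum>k\<le>M. TT q u (q^2*N) k / gm q u N - TT q u N k) = hh q u N M"
proof (induction M)
  case 0 then show ?case using wz0[OF q N EN] by simp
next
  case (Suc M) then show ?case using wzS[OF q N E EN, of M] by simp
qed

lemma nu_zero:
  assumes "q \<noteq> 0" "n < k"
  shows "nu q (q^(2*n)) k = 0"
  unfolding nu_def using assms by (auto intro!: bexI[of _ n])

lemma norm_qpow_le1: "norm (q::complex) < 1 \<Longrightarrow> norm (q^n) \<le> 1"
  by (simp add: norm_power power_le_one)

lemma sum_identity: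
  assumes q: "q \<noteq> 0" "norm q < 1" and E: "\<And>m. 0 < m \<Longrightarrow> EE q u m \<noteq> 0"
  shows "(\<Sum>k\<le>n. TT q u (q^(2*n)) k) = (\<Prod>i<n. gm q u (q^(2*i)))"
proof (induction n)
  case 0 then show ?case using pow_ne1[OF q(2), of 1] by (simp add: TT_def tau_def nu_def)
next
  case (Suc n)
  define N where "N = q^(2*n)"
  have N1: "norm N \<le> 1" unfolding N_def by (rule norm_qpow_le1[OF q(2)])
  have qN: "q^2*N = q^(2*Suc n)" by (simp add: N_def power_add power2_eq_square)
  have EN: "(1 - q^2*N)^2 - q^2*N*u \<noteq> 0"
    using E[of "2*Suc n"] by (simp add: EE_def qN)
  have gm0: "gm q u N \<noteq> 0"
  proof -
    have "1 - N*q^3 \<noteq> 0" "1 - N*q^1 \<noteq> 0" using Npow_ne1[OF q(2) N1, of 3] Npow_ne1[OF q(2) N1, of 1] by auto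
    then show ?thesis using EN by (simp add: gm_def mult.commute)
  qed
  have h0: "hh q u N (Suc n) = 0" using nu_zero[OF q(1), of n "Suc n"] by (simp add: hh_def N_def)
  have T0: "TT q u N (Suc n) = 0" using nu_zero[OF q(1), of n "Suc n"] by (simp add: TT_def N_def)
  have "(\<Sum>k\<le>Suc n. TT q u (q^2*N) k / gm q u N - TT q u N k) = 0"
    using wz[OF q N1 E EN, of "Suc n"] h0 by simp
  then have "(\<Sum>k\<le>Suc n. TT q u (q^2*N) k / gm q u N) = (\<Sum>k\<le>Suc n. TT q u N k)"
    by (simp only: sum_subtractf right_minus_eq)
  then have "(\<Sum>k\<le>Suc n. TT q u (q^2*N) k) / gm q u N = (\<Sum>k\<le>Suc n. TT q u N k)"
    by (simp only: sum_divide_distrib)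
  also have "\<dots> = (\<Sum>k\<le>n. TT q u N k)" using T0 by simp
  also have "\<dots> = (\<Prod>i<n. gm q u (q^(2*i)))" using Suc by (simp add: N_def)
  finally have "(\<Sum>k\<le>Suc n. TT q u (q^2*N) k) = gm q u N * (\<Prod>i<n. gm q u (q^(2*i)))"
    using gm0 by (simp add: field_simps)
  moreover have "(\<Prod>i<Suc n. gm q u (q^(2*i))) = gm q u N * (\<Prod>i<n. gm q u (q^(2*i)))"
    by (simp add: N_def mult.commute)
  ultimately show ?case by (simp only: qN)
qed

lemma EE_nonzero:
  assumes q: "norm q < 1" and u: "norm u < (1 - norm q)^2" and m: "0 < m"
  shows "EE q u m \<noteq> 0"
proof
  assume "EE q u m = 0"
  then have eq: "(1 - q^m)^2 = q^m * u" by (simp add: EE_def)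
  have "norm (q^m) \<le> norm q"
  proof -
    have "norm q ^ m \<le> norm q ^ 1" by (rule power_decreasing) (use m q in auto)
    then show ?thesis by (simp add: norm_power)
  qed
  then have "1 - norm q \<le> norm (1 - q^m)"
    by (metis norm_one norm_triangle_ineq2 add_le_cancel_left diff_add_cancel diff_left_mono order_trans)
  moreover have "0 \<le> 1 - norm q" using q by simp
  ultimately have "(1 - norm q)^2 \<le> norm (1 - q^m)^2" by (rule power_mono)
  also have "\<dots> = norm (q^m * u)" using eq by (simp add: norm_power flip: eq)
  also have "\<dots> \<le> norm u"
  proof -
    have "norm (q^m) \<le> 1" by (rule norm_qpow_le1[OF q])
    then have "norm (q^m) * norm u \<le> 1 * norm u" by (rule mult_right_mono) simp
    then show ?thesis by (simp add: norm_mult)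
  qed
  finally show False using u by simp
qed

lemma DERIV_prod_log:
  fixes f :: "nat \<Rightarrow> complex \<Rightarrow> complex"
  assumes "\<And>i. i < k \<Longrightarrow> (f i has_field_derivative f' i) (at x)"
    and "\<And>i. i < k \<Longrightarrow> f i x \<noteq> 0"
  shows "((\<lambda>y. \<Prod>i<k. f i y) has_field_derivative (\<Prod>i<k. f i x) * (\<Sum>i<k. f' i / f i x)) (at x)"
  using assms
proof (induction k)
  case 0 then show ?case by simp
next
  case (Suc k)
  have IH: "((\<lambda>y. \<Prod>i<k. f i y) has_field_derivative (\<Prod>i<k. f i x) * (\<Sum>i<k. f' i / f i x)) (at x)"
    using Suc by simp
  have d: "(f k has_field_derivative f' k) (at x)" using Suc by simp
  have nz: "f k x \<noteq> 0" using Suc by simp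
  have "((\<lambda>y. (\<Prod>i<k. f i y) * f k y) has_field_derivative
          (\<Prod>i<k. f i x) * (\<Sum>i<k. f' i / f i x) * f k x + f' k * (\<Prod>i<k. f i x)) (at x)"
    by (rule DERIV_mult[OF IH d])
  moreover have "(\<Prod>i<k. f i x) * (\<Sum>i<k. f' i / f i x) * f k x + f' k * (\<Prod>i<k. f i x)
      = (\<Prod>i<Suc k. f i x) * (\<Sum>i<Suc k. f' i / f i x)"
    using nz by (simp add: field_simps)
  ultimately show ?case by simp
qed

lemma DERIV_frac:
  fixes a b c d e :: complex
  assumes "d \<noteq> 0"
  shows "((\<lambda>u. c*(a - b*u)/(d - e*u)) has_field_derivative c*(a*e - b*d)/d^2) (at 0)"
proof -
  have "((\<lambda>u. c*(a - b*u)/(d - e*u)) has_field_derivative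
      ((c*(0 - b*1)) * (d - e*0) - (c*(a - b*0)) * (0 - e*1)) / ((d - e*0) * (d - e*0))) (at 0)"
    by (rule DERIV_divide) (auto intro!: derivative_eq_intros simp: assms)
  moreover have "((c*(0 - b*1)) * (d - e*0) - (c*(a - b*0)) * (0 - e*1)) / ((d - e*0) * (d - e*0)) = c*(a*e - b*d)/d^2"
    by (simp add: algebra_simps power2_eq_square)
  ultimately show ?thesis by simp
qed

definition SL :: "complex \<Rightarrow> nat \<Rightarrow> complex" where
  "SL q k = (\<Sum>i<k. q^(2*i+2)/(1-q^(2*i+2))^2 - q^(2*i+1)/(1-q^(2*i+1))^2)"
definition SR :: "complex \<Rightarrow> nat \<Rightarrow> complex" where
  "SR q n = (\<Sum>i<n. q^(2*i+2)/(1-q^(2*i+2))^2)"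

lemma sg_frac:
  "sg q u N i = (- (q^(2*i+1)) * (1 - q^(2*i+1)) / ((1 - q^(2*i+2)) * (1 - N*q^(2*i+3))))
     * ((1 - q^(2*i+1))^2 - q^(2*i+1) * u) / ((1 - q^(2*i+2))^2 - q^(2*i+2) * u)"
  by (simp add: sg_def EE_def)

lemma DERIV_sg:
  assumes q: "q \<noteq> 0" "norm q < 1" and N: "norm N \<le> 1"
  shows "((\<lambda>u. sg q u N i) has_field_derivative
           sg q 0 N i * (q^(2*i+2)/(1-q^(2*i+2))^2 - q^(2*i+1)/(1-q^(2*i+1))^2)) (at 0)"
proof -
  define c where "c = - (q^(2*i+1)) * (1 - q^(2*i+1)) / ((1 - q^(2*i+2)) * (1 - N*q^(2*i+3)))"
  define a where "a = (1 - q^(2*i+1))^2"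
  define b where "b = q^(2*i+1)"
  define d where "d = (1 - q^(2*i+2))^2"
  define e where "e = q^(2*i+2)"
  have a0: "1 - q^(2*i+1) \<noteq> 0" by (rule pow_ne1[OF q(2)]) simp
  have d0: "1 - q^(2*i+2) \<noteq> 0" by (rule pow_ne1[OF q(2)]) simp
  have n0: "1 - N*q^(2*i+3) \<noteq> 0" by (rule Npow_ne1[OF q(2) N]) simp
  have f: "\<And>u. sg q u N i = c*(a - b*u)/(d - e*u)" unfolding sg_frac a_def b_def c_def d_def e_def ..
  have "((\<lambda>u. c*(a - b*u)/(d - e*u)) has_field_derivative c*(a*e - b*d)/d^2) (at 0)"
    unfolding d_def by (rule DERIV_frac) (rule power_not_zero[OF d0])
  moreover have "c*(a*e - b*d)/d^2 = c*(a - b*0)/(d - e*0) * (e/d - b/a)"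
    using a0 d0 by (simp add: a_def d_def field_simps)
  ultimately show ?thesis unfolding f by (simp add: b_def e_def a_def d_def)
qed

lemma DERIV_TT:
  assumes q: "q \<noteq> 0" "norm q < 1" and N: "norm N \<le> 1"
  shows "((\<lambda>u. TT q u N k) has_field_derivative TT q 0 N k * SL q k) (at 0)"
proof -
  have sg0: "sg q 0 N i \<noteq> 0" for i
  proof -
    have a0: "1 - q^(2*i+1) \<noteq> 0" by (rule pow_ne1[OF q(2)]) simp
    have d0: "1 - q^(2*i+2) \<noteq> 0" by (rule pow_ne1[OF q(2)]) simp
    have n0: "1 - N*q^(2*i+3) \<noteq> 0" by (rule Npow_ne1[OF q(2) N]) simp
    have X: "\<And>x y z w v :: complex. x \<noteq> 0 \<Longrightarrow> y \<noteq> 0 \<Longrightarrow> z \<noteq> 0 \<Longrightarrow> w \<noteq> 0 \<Longrightarrow>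
       - x * y * (y^2 - x * 0) / (z * w * (z^2 - v * 0)) \<noteq> 0" by simp
    show ?thesis unfolding sg_def EE_def by (rule X) (use a0 d0 n0 q(1) in auto)
  qed
  have "((\<lambda>u. tau q u N k) has_field_derivative
      (\<Prod>i<k. sg q 0 N i) * (\<Sum>i<k. (sg q 0 N i * (q^(2*i+2)/(1-q^(2*i+2))^2 - q^(2*i+1)/(1-q^(2*i+1))^2)) / sg q 0 N i)) (at 0)"
    unfolding tau_def by (rule DERIV_prod_log) (use DERIV_sg[OF q N] sg0 in auto)
  moreover have "(\<Sum>i<k. (sg q 0 N i * (q^(2*i+2)/(1-q^(2*i+2))^2 - q^(2*i+1)/(1-q^(2*i+1))^2)) / sg q 0 N i) = SL q k"
    unfolding SL_def by (rule sum.cong) (use sg0 in auto)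
  ultimately have D: "((\<lambda>u. tau q u N k) has_field_derivative tau q 0 N k * SL q k) (at 0)"
    by (simp add: tau_def)
  have "((\<lambda>u. ((1 - q^(4*k+1))/(1-q) * nu q N k) * tau q u N k) has_field_derivative
          ((1 - q^(4*k+1))/(1-q) * nu q N k) * (tau q 0 N k * SL q k)) (at 0)"
    by (rule DERIV_cmult[OF D])
  then show ?thesis by (simp add: TT_def mult_ac)
qed

lemma DERIV_gm:
  assumes q: "q \<noteq> 0" "norm q < 1"
  shows "((\<lambda>u. gm q u (q^(2*i))) has_field_derivative gm q 0 (q^(2*i)) * (q^(2*i+2)/(1-q^(2*i+2))^2)) (at 0)"
proof -
  have e2: "q^2 * q^(2*i) = q^(2*i+2)" by (simp only: power_add mult.commute)
  define c where "c = (1 - q^3*q^(2*i))*(1 - q*q^(2*i))"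
  define d where "d = (1 - q^(2*i+2))^2"
  define e where "e = q^(2*i+2)"
  have d0: "1 - q^(2*i+2) \<noteq> 0" by (rule pow_ne1[OF q(2)]) simp
  have f: "\<And>u. gm q u (q^(2*i)) = c*(1 - 0*u)/(d - e*u)"
    unfolding gm_def c_def d_def e_def e2 by (simp add: mult.commute)
  have "((\<lambda>u. c*(1 - 0*u)/(d - e*u)) has_field_derivative c*(1*e - 0*d)/d^2) (at 0)"
    unfolding d_def by (rule DERIV_frac) (rule power_not_zero[OF d0])
  moreover have "c*(1*e - 0*d)/d^2 = c*(1 - 0*0)/(d - e*0) * (e/d)"
    using d0 by (simp add: d_def field_simps power2_eq_square)
  ultimately show ?thesis unfolding f by (simp add: e_def d_def)
qed

lemma fin_id:
  assumes q: "q \<noteq> 0" "norm q < 1"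
  shows "(\<Sum>k\<le>n. TT q 0 (q^(2*n)) k * SL q k) = (\<Prod>i<n. gm q 0 (q^(2*i))) * SR q n"
proof -
  define S where "S = ball (0::complex) ((1 - norm q)^2)"
  have S: "open S" "0 \<in> S" using q by (auto simp: S_def)
  have N1: "norm (q^(2*n)) \<le> 1" by (rule norm_qpow_le1[OF q(2)])
  have eqS: "\<And>u. u \<in> S \<Longrightarrow> (\<Sum>k\<le>n. TT q u (q^(2*n)) k) = (\<Prod>i<n. gm q u (q^(2*i)))"
  proof -
    fix u assume "u \<in> S"
    then have "norm u < (1 - norm q)^2" by (simp add: S_def)
    then show "(\<Sum>k\<le>n. TT q u (q^(2*n)) k) = (\<Prod>i<n. gm q u (q^(2*i)))"
      by (intro sum_identity q EE_nonzero[OF q(2)])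
  qed
  have DL: "((\<lambda>u. \<Sum>k\<le>n. TT q u (q^(2*n)) k) has_field_derivative (\<Sum>k\<le>n. TT q 0 (q^(2*n)) k * SL q k)) (at 0)"
    by (rule DERIV_sum) (rule DERIV_TT[OF q N1])
  have DR': "((\<lambda>u. \<Prod>i<n. gm q u (q^(2*i))) has_field_derivative (\<Sum>k\<le>n. TT q 0 (q^(2*n)) k * SL q k)) (at 0)"
    by (rule has_field_derivative_transform_within_open[OF DL S]) (rule eqS)
  have gm0: "gm q 0 (q^(2*i)) \<noteq> 0" for i
  proof -
    have N: "norm (q^(2*i)) \<le> 1" by (rule norm_qpow_le1[OF q(2)])
    have "1 - q^(2*i)*q^3 \<noteq> 0" "1 - q^(2*i)*q^1 \<noteq> 0"
      using Npow_ne1[OF q(2) N, of 3] Npow_ne1[OF q(2) N, of 1] by auto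
    moreover have "1 - q^2 * q^(2*i) \<noteq> 0"
    proof -
      have eq: "q^2 * q^(2*i) = q^(2*i+2)" by (simp only: power_add mult.commute)
      have d0: "1 - q^(2*i+2) \<noteq> 0" by (rule pow_ne1[OF q(2)]) simp
      show ?thesis unfolding eq by (rule d0)
    qed
    ultimately show ?thesis by (simp add: gm_def mult.commute)
  qed
  have DR: "((\<lambda>u. \<Prod>i<n. gm q u (q^(2*i))) has_field_derivative
       (\<Prod>i<n. gm q 0 (q^(2*i))) * (\<Sum>i<n. (gm q 0 (q^(2*i)) * (q^(2*i+2)/(1-q^(2*i+2))^2)) / gm q 0 (q^(2*i)))) (at 0)"
    by (rule DERIV_prod_log) (use DERIV_gm[OF q] gm0 in auto)
  have "(\<Sum>i<n. (gm q 0 (q^(2*i)) * (q^(2*i+2)/(1-q^(2*i+2))^2)) / gm q 0 (q^(2*i))) = SR q n"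
    unfolding SR_def by (rule sum.cong) (use gm0 in auto)
  with DERIV_unique[OF DR' DR] show ?thesis by simp
qed

lemma qint_eq: "norm (q::complex) < 1 \<Longrightarrow> qint q m = (1 - q^m)/(1-q)"
  unfolding qint_def sum_gp_strict using pow_ne1[of q 1] by auto

lemma qpoch_Suc: "qpoch x p (Suc k) = qpoch x p k * (1 - x * p^k)"
  by (simp add: qpoch_def)

lemma qpoch_nz: "norm (q::complex) < 1 \<Longrightarrow> qpoch (q^2) (q^2) k \<noteq> 0"
proof (induction k)
  case 0 then show ?case by (simp add: qpoch_def)
next
  case (Suc k)
  have "q^2 * (q^2)^k = q^(2*k+2)" unfolding power_add power_mult by (rule mult.commute)
  moreover have "1 - q^(2*k+2) \<noteq> 0" by (rule pow_ne1[OF Suc.prems]) simp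
  ultimately show ?case using Suc by (simp add: qpoch_Suc)
qed

lemma tau00:
  assumes q: "norm q < 1"
  shows "tau q 0 0 k = (-1)^k * q^(k^2) * (qpoch q (q^2) k)^3 / (qpoch (q^2) (q^2) k)^3"
proof (induction k)
  case 0 then show ?case by (simp add: tau_def qpoch_def)
next
  case (Suc k)
  have e1: "q * (q^2)^k = q^(2*k+1)" by (simp add: power_mult[symmetric] mult.commute)
  have e2: "q^2 * (q^2)^k = q^(2*k+2)" unfolding power_add power_mult by (rule mult.commute)
  have e3: "q^((Suc k)^2) = q^(k^2) * q^(2*k+1)"
  proof -
    have "(Suc k)^2 = k^2 + (2*k+1)" by (simp add: power2_eq_square)
    then show ?thesis by (simp add: power_add)
  qed
  have d: "1 - q^(2*k+2) \<noteq> 0" by (rule pow_ne1[OF q]) simp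
  have P: "qpoch (q^2) (q^2) k \<noteq> 0" by (rule qpoch_nz[OF q])
  have sg: "sg q 0 0 k = - (q^(2*k+1)) * (1 - q^(2*k+1))^3 / (1 - q^(2*k+2))^3"
    unfolding sg_def EE_def by (simp add: power2_eq_square power3_eq_cube mult_ac)
  have "tau q 0 0 (Suc k) = (-1)^k * q^(k^2) * (qpoch q (q^2) k)^3 / (qpoch (q^2) (q^2) k)^3
        * (- (q^(2*k+1)) * (1 - q^(2*k+1))^3 / (1 - q^(2*k+2))^3)"
    by (simp add: tau_Suc Suc sg)
  also have "\<dots> = (-1)^(Suc k) * (q^(k^2) * q^(2*k+1)) * (qpoch q (q^2) k * (1 - q^(2*k+1)))^3
        / (qpoch (q^2) (q^2) k * (1 - q^(2*k+2)))^3"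
  proof -
    have g: "\<And>s x A B y a d::complex. d \<noteq> 0 \<Longrightarrow> B \<noteq> 0 \<Longrightarrow>
       s*x*A^3/B^3*(-y*a^3/d^3) = (-s)*(x*y)*(A*a)^3/(B*d)^3"
      by (simp add: field_simps power_mult_distrib)
    show ?thesis using g[OF d P, of "(-1)^k"] by simp
  qed
  also have "\<dots> = (-1)^(Suc k) * q^((Suc k)^2) * (qpoch q (q^2) (Suc k))^3 / (qpoch (q^2) (q^2) (Suc k))^3"
    unfolding qpoch_Suc e1 e2 e3 ..
  finally show ?case .
qed

lemma TT00:
  assumes q: "norm q < 1"
  shows "TT q 0 0 k = (-1)^k * q^(k^2) * qint q (4*k+1) * (qpoch q (q^2) k)^3 / (qpoch (q^2) (q^2) k)^3"
  unfolding TT_def tau00[OF q] qint_eq[OF q] by (simp add: nu_def)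

lemma SL_eq:
  assumes q: "norm q < 1"
  shows "(1-q)^2 * SL q k = (\<Sum>i = 1..2 * k. (-1) ^ i * q ^ i / (qint q i) ^ 2)"
proof (induction k)
  case 0 then show ?case by (simp add: SL_def)
next
  case (Suc k)
  have a: "1 - q \<noteq> 0" using pow_ne1[OF q, of 1] by simp
  have b: "1 - q^(2*k+1) \<noteq> 0" by (rule pow_ne1[OF q]) simp
  have c: "1 - q^(2*k+2) \<noteq> 0" by (rule pow_ne1[OF q]) simp
  have s: "{1..2*Suc k} = insert (2*k+2) (insert (2*k+1) {1..2*k})" by auto
  have "(\<Sum>i = 1..2 * Suc k. (-1) ^ i * q ^ i / (qint q i) ^ 2)
      = (\<Sum>i = 1..2 * k. (-1) ^ i * q ^ i / (qint q i) ^ 2)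
        + ((-1)^(2*k+1) * q^(2*k+1) / (qint q (2*k+1))^2 + (-1)^(2*k+2) * q^(2*k+2) / (qint q (2*k+2))^2)"
    unfolding s by simp
  also have "(-1)^(2*k+1) * q^(2*k+1) / (qint q (2*k+1))^2 + (-1)^(2*k+2) * q^(2*k+2) / (qint q (2*k+2))^2
      = (1-q)^2 * (q^(2*k+2)/(1-q^(2*k+2))^2 - q^(2*k+1)/(1-q^(2*k+1))^2)"
    unfolding qint_eq[OF q] using a b c by (simp add: field_simps)
  finally show ?case using Suc by (simp add: SL_def algebra_simps)
qed

lemma SR_eq:
  assumes q: "norm q < 1"
  shows "(1-q)^2 * SR q n = (\<Sum>j<Suc n. if j = 0 then 0 else q ^ (2 * j) / (qint q (2 * j)) ^ 2)"
proof (induction n)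
  case 0 then show ?case by (simp add: SR_def)
next
  case (Suc n)
  have a: "1 - q \<noteq> 0" using pow_ne1[OF q, of 1] by simp
  have c: "1 - q^(2*n+2) \<noteq> 0" by (rule pow_ne1[OF q]) simp
  have e: "2 * Suc n = 2*n+2" by simp
  have "q ^ (2 * Suc n) / (qint q (2 * Suc n)) ^ 2 = (1-q)^2 * (q^(2*n+2)/(1-q^(2*n+2))^2)"
    unfolding e qint_eq[OF q] using a c by (simp add: field_simps)
  then show ?case using Suc by (simp add: SR_def algebra_simps)
qed

lemma qpow_lim: "norm (q::complex) < 1 \<Longrightarrow> (\<lambda>n. q^(2*n)) \<longlonglongrightarrow> 0"
proof -
  assume q: "norm q < 1"
  have "norm (q^2) < 1" using q by (simp add: norm_power power_less_one_iff)
  then have "(\<lambda>n. (q^2)^n) \<longlonglongrightarrow> 0" by (rule LIMSEQ_power_zero)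
  then show ?thesis by (simp add: power_mult)
qed

lemma lim_TT:
  assumes q: "q \<noteq> 0" "norm q < 1"
  shows "(\<lambda>n. TT q 0 (q^(2*n)) k) \<longlonglongrightarrow> TT q 0 0 k"
proof -
  have L: "(\<lambda>n. q^(2*n)) \<longlonglongrightarrow> 0" by (rule qpow_lim[OF q(2)])
  have sg: "(\<lambda>n. sg q 0 (q^(2*n)) i) \<longlonglongrightarrow> sg q 0 0 i" for i
  proof -
    have d0: "1 - q^(2*i+2) \<noteq> 0" by (rule pow_ne1[OF q(2)]) simp
    have "EE q 0 (2*i+2) \<noteq> 0" using d0 by (simp add: EE_def)
    then have nz: "(1 - q^(2*i+2)) * (1 - 0*q^(2*i+3)) * EE q 0 (2*i+2) \<noteq> 0" using d0 by simp
    show ?thesis unfolding sg_def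
      by (intro tendsto_intros L nz)
  qed
  have t: "(\<lambda>n. tau q 0 (q^(2*n)) k) \<longlonglongrightarrow> tau q 0 0 k"
    unfolding tau_def by (intro tendsto_prod sg)
  have v: "(\<lambda>n. nu q (q^(2*n)) k) \<longlonglongrightarrow> nu q 0 k"
    unfolding nu_def using q by (intro tendsto_prod tendsto_intros L) simp
  show ?thesis unfolding TT_def by (intro tendsto_intros t v)
qed

lemma qpoch_inf_lim:
  fixes x p :: complex
  assumes p: "norm p < 1"
  shows "(\<lambda>n. \<Prod>i<n. 1 - x*p^i) \<longlonglongrightarrow> qpoch_inf x p"
    and "(\<And>i. 1 - x*p^i \<noteq> 0) \<Longrightarrow> qpoch_inf x p \<noteq> 0"
proof -
  have "summable (\<lambda>i. norm x * norm p ^ i)"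
    by (intro summable_mult summable_geometric) (use p in simp)
  then have "summable (\<lambda>i. norm ((1 - x*p^i) - 1))" by (simp add: norm_mult norm_power)
  then have "abs_convergent_prod (\<lambda>i. 1 - x*p^i)" by (rule summable_imp_abs_convergent_prod)
  then have c: "convergent_prod (\<lambda>i. 1 - x*p^i)" by (rule abs_convergent_prod_imp_convergent_prod)
  from convergent_prod_LIMSEQ[OF c]
  show "(\<lambda>n. \<Prod>i<n. 1 - x*p^i) \<longlonglongrightarrow> qpoch_inf x p"
    unfolding qpoch_inf_def by (simp add: LIMSEQ_lessThan_iff_atMost)
  show "(\<And>i. 1 - x*p^i \<noteq> 0) \<Longrightarrow> qpoch_inf x p \<noteq> 0"
    unfolding qpoch_inf_def by (rule prodinf_nonzero[OF c])
qed

lemma gm_prod_lim: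
  assumes q: "q \<noteq> 0" "norm q < 1"
  shows "(\<lambda>n. \<Prod>i<n. gm q 0 (q^(2*i)))
     \<longlonglongrightarrow> qpoch_inf q (q ^ 2) * qpoch_inf (q ^ 3) (q ^ 2) / (qpoch_inf (q ^ 2) (q ^ 2)) ^ 2"
proof -
  have p: "norm (q^2) < 1" using q by (simp add: norm_power power_less_one_iff)
  have eq: "(\<Prod>i<n. gm q 0 (q^(2*i))) = (\<Prod>i<n. 1 - q*(q^2)^i) * (\<Prod>i<n. 1 - q^3*(q^2)^i) / (\<Prod>i<n. 1 - q^2*(q^2)^i)^2" for n
  proof -
    have "(\<Prod>i<n. gm q 0 (q^(2*i))) = (\<Prod>i<n. (1 - q*(q^2)^i) * (1 - q^3*(q^2)^i) / (1 - q^2*(q^2)^i)^2)"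
    proof (rule prod.cong)
      fix i
      show "gm q 0 (q^(2*i)) = (1 - q*(q^2)^i) * (1 - q^3*(q^2)^i) / (1 - q^2*(q^2)^i)^2"
        unfolding gm_def power_mult by (simp add: mult.commute)
    qed simp
    also have "\<dots> = (\<Prod>i<n. 1 - q*(q^2)^i) * (\<Prod>i<n. 1 - q^3*(q^2)^i) / (\<Prod>i<n. 1 - q^2*(q^2)^i)^2"
      by (simp add: prod_dividef prod.distrib prod_power_distrib)
    finally show ?thesis .
  qed
  have nz: "1 - q^2*(q^2)^i \<noteq> 0" for i
  proof -
    have "q^2*(q^2)^i = q^(2*i+2)" unfolding power_add power_mult by (rule mult.commute)
    moreover have "1 - q^(2*i+2) \<noteq> 0" by (rule pow_ne1[OF q(2)]) simp
    ultimately show ?thesis by simp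
  qed
  have "(\<lambda>n. (\<Prod>i<n. 1 - q*(q^2)^i) * (\<Prod>i<n. 1 - q^3*(q^2)^i) / (\<Prod>i<n. 1 - q^2*(q^2)^i)^2)
     \<longlonglongrightarrow> qpoch_inf q (q ^ 2) * qpoch_inf (q ^ 3) (q ^ 2) / (qpoch_inf (q ^ 2) (q ^ 2)) ^ 2"
    by (intro tendsto_intros qpoch_inf_lim(1)[OF p]) (use qpoch_inf_lim(2)[OF p] nz in auto)
  then show ?thesis by (simp only: eq)
qed

lemma summable_rhs:
  assumes q: "norm (q::complex) < 1"
  shows "summable (\<lambda>j::nat. if j = 0 then 0 else q ^ (2 * j) / (qint q (2 * j)) ^ 2)"
proof -
  define r where "r = 1 - norm q"
  have r: "0 < r" using q by (simp add: r_def)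
  have b: "norm (if j = 0 then 0 else q ^ (2 * j) / (qint q (2 * j)) ^ 2) \<le> (4 / r^2) * (norm q ^ 2) ^ j" for j
  proof (cases "j = 0")
    case True then show ?thesis using r by simp
  next
    case False
    have a: "norm (1 - q) \<le> 2"
      using norm_triangle_ineq4[of 1 q] q by simp
    have d: "r \<le> norm (1 - q^(2*j))"
    proof -
      have "norm (q^(2*j)) \<le> norm q" using False q
        by (simp add: norm_power power_decreasing[of 1 "2*j" "norm q", simplified])
      then show ?thesis using norm_triangle_ineq2[of 1 "q^(2*j)"] by (simp add: r_def)
    qed
    have "norm (q ^ (2 * j) / (qint q (2 * j)) ^ 2) = norm q ^ (2*j) * norm (1-q)^2 / norm (1 - q^(2*j))^2"
      unfolding qint_eq[OF q] by (simp add: norm_divide norm_power norm_mult power_divide)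
    also have "\<dots> \<le> norm q ^ (2*j) * 2^2 / r^2"
      by (intro frac_le mult_left_mono power_mono a d) (use r in auto)
    also have "\<dots> = (4 / r^2) * (norm q ^ 2) ^ j" by (simp add: power_mult)
    finally show ?thesis using False by simp
  qed
  have "summable (\<lambda>j. (4 / r^2) * (norm q ^ 2) ^ j)"
    by (intro summable_mult summable_geometric) (use q in \<open>simp add: power_less_one_iff abs_less_iff\<close>)
  then show ?thesis by (rule summable_comparison_test[rotated]) (use b in auto)
qed

lemma norm_1m_le2: "norm (q::complex) < 1 \<Longrightarrow> norm (1 - q^m) \<le> 2"
proof -
  assume q: "norm q < 1"
  have "norm (q^m) \<le> 1" by (rule norm_qpow_le1[OF q])
  then show ?thesis using norm_triangle_ineq4[of 1 "q^m"] by simp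
qed

lemma norm_1m_ge:
  assumes q: "norm (q::complex) < 1" and N: "norm (N::complex) \<le> 1" and m: "0 < m"
  shows "1 - norm q \<le> norm (1 - N*q^m)"
proof -
  have "norm (q^m) \<le> norm q"
  proof -
    have "norm q ^ m \<le> norm q ^ 1" by (rule power_decreasing) (use m q in auto)
    then show ?thesis by (simp add: norm_power)
  qed
  moreover have "norm N * norm (q^m) \<le> 1 * norm (q^m)" by (rule mult_right_mono) (use N in auto)
  ultimately have "norm (N*q^m) \<le> norm q" by (simp add: norm_mult)
  then show ?thesis using norm_triangle_ineq2[of 1 "N*q^m"] by simp
qed

lemma real_frac_bound:
  fixes t \<alpha> \<delta> \<epsilon> r :: real
  assumes "0 \<le> t" "0 \<le> \<alpha>" "\<alpha> \<le> 2" "0 < r" "r \<le> \<delta>" "r \<le> \<epsilon>"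
  shows "t*\<alpha>*\<alpha>^2/(\<delta>*\<epsilon>*\<delta>^2) \<le> 8/r^4 * t"
proof -
  have "\<alpha>*\<alpha>^2 \<le> 2*2^2" by (intro mult_mono power_mono) (use assms in auto)
  then have n: "t*\<alpha>*\<alpha>^2 \<le> t*8" using assms(1) by (simp add: mult.assoc mult_left_mono)
  have "r*r*r^2 \<le> \<delta>*\<epsilon>*\<delta>^2" by (intro mult_mono power_mono) (use assms in auto)
  then have d: "r^4 \<le> \<delta>*\<epsilon>*\<delta>^2" by (simp add: power2_eq_square power4_eq_xxxx mult_ac)
  have "t*\<alpha>*\<alpha>^2/(\<delta>*\<epsilon>*\<delta>^2) \<le> t*8/r^4"
    by (rule frac_le[OF _ n _ d]) (use assms in auto)
  then show ?thesis by (simp add: mult.commute)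
qed

lemma sg_bound:
  assumes q: "norm q < 1" and N: "norm N \<le> 1"
  shows "norm (sg q 0 N i) \<le> 8/(1 - norm q)^4 * norm q^(2*i+1)"
proof -
  have "norm (sg q 0 N i) = norm q^(2*i+1) * norm (1 - q^(2*i+1)) * norm (1 - q^(2*i+1))^2
      / (norm (1 - q^(2*i+2)) * norm (1 - N*q^(2*i+3)) * norm (1 - q^(2*i+2))^2)"
    by (simp add: sg_def EE_def norm_mult norm_divide norm_power norm_minus_cancel)
  also have "\<dots> \<le> 8/(1 - norm q)^4 * norm q^(2*i+1)"
  proof (rule real_frac_bound)
    show "norm (1 - q^(2*i+1)) \<le> 2" by (rule norm_1m_le2[OF q])
    show "1 - norm q \<le> norm (1 - q^(2*i+2))" using norm_1m_ge[OF q, of 1 "2*i+2"] by simp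
    show "1 - norm q \<le> norm (1 - N*q^(2*i+3))" using norm_1m_ge[OF q N, of "2*i+3"] by simp
  qed (use q in auto)
  finally show ?thesis .
qed

lemma prod_odd_pow: "(\<Prod>i<k. (B::real) * x^(2*i+1)) = B^k * x^(k^2)"
proof (induction k)
  case 0 then show ?case by simp
next
  case (Suc k)
  have "(Suc k)^2 = k^2 + (2*k+1)" by (simp add: power2_eq_square)
  then show ?case using Suc by (simp add: power_add mult_ac)
qed

lemma tau_bound:
  assumes q: "norm q < 1" and N: "norm N \<le> 1"
  shows "norm (tau q 0 N k) \<le> (8/(1 - norm q)^4)^k * norm q^(k^2)"
proof -
  have "norm (tau q 0 N k) = (\<Prod>i<k. norm (sg q 0 N i))" by (simp add: tau_def prod_norm)
  also have "\<dots> \<le> (\<Prod>i<k. 8/(1 - norm q)^4 * norm q^(2*i+1))"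
    by (rule prod_mono) (use sg_bound[OF q N] in auto)
  also have "\<dots> = (8/(1 - norm q)^4)^k * norm q^(k^2)" by (rule prod_odd_pow)
  finally show ?thesis .
qed

lemma nu_bound:
  assumes q: "q \<noteq> 0" "norm q < 1"
  shows "norm (nu q (q^(2*n)) k) \<le> 2^k"
proof (cases "n < k")
  case True then show ?thesis using nu_zero[OF q(1) True] by simp
next
  case False
  have "norm (nu q (q^(2*n)) k) = (\<Prod>i<k. norm (1 - q^(2*n) / q^(2*i)))" by (simp add: nu_def prod_norm)
  also have "\<dots> \<le> (\<Prod>i<k. 2)"
  proof (rule prod_mono)
    fix i assume "i \<in> {..<k}"
    then have "2*i \<le> 2*n" using False by simp
    then have "q^(2*n) / q^(2*i) = q^(2*n - 2*i)" using q(1) by (simp add: power_diff)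
    then show "0 \<le> norm (1 - q^(2*n) / q^(2*i)) \<and> norm (1 - q^(2*n) / q^(2*i)) \<le> 2"
      using norm_1m_le2[OF q(2), of "2*n - 2*i"] by simp
  qed
  also have "\<dots> = 2^k" by simp
  finally show ?thesis .
qed

lemma SL_bound:
  assumes q: "norm q < 1"
  shows "norm (SL q k) \<le> real k * (2/(1 - norm q)^2)"
proof -
  have t: "norm (q^m/(1-q^m)^2) \<le> 1/(1 - norm q)^2" if "0 < m" for m
  proof -
    have r: "0 < 1 - norm q" using q by simp
    have d: "1 - norm q \<le> norm (1 - q^m)" using norm_1m_ge[OF q, of 1 m] that by simp
    have "norm (q^m/(1-q^m)^2) = norm (q^m) / norm (1-q^m)^2" by (simp add: norm_divide norm_power)
    also have "\<dots> \<le> 1 / (1 - norm q)^2"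
      by (intro frac_le power_mono norm_qpow_le1[OF q] d) (use r in auto)
    finally show ?thesis .
  qed
  have "norm (SL q k) \<le> (\<Sum>i<k. norm (q^(2*i+2)/(1-q^(2*i+2))^2 - q^(2*i+1)/(1-q^(2*i+1))^2))"
    unfolding SL_def by (rule norm_sum)
  also have "\<dots> \<le> (\<Sum>i<k. 2/(1 - norm q)^2)"
  proof (rule sum_mono)
    fix i
    have "norm (q^(2*i+2)/(1-q^(2*i+2))^2 - q^(2*i+1)/(1-q^(2*i+1))^2)
        \<le> norm (q^(2*i+2)/(1-q^(2*i+2))^2) + norm (q^(2*i+1)/(1-q^(2*i+1))^2)" by (rule norm_triangle_ineq4)
    also have "\<dots> \<le> 1/(1 - norm q)^2 + 1/(1 - norm q)^2" by (intro add_mono t) auto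
    finally show "norm (q^(2*i+2)/(1-q^(2*i+2))^2 - q^(2*i+1)/(1-q^(2*i+1))^2) \<le> 2/(1 - norm q)^2" by simp
  qed
  also have "\<dots> = real k * (2/(1 - norm q)^2)" by simp
  finally show ?thesis .
qed

lemma term_bound:
  assumes q: "q \<noteq> 0" "norm q < 1"
  shows "norm (TT q 0 (q^(2*n)) k * SL q k * (1-q)^2)
     \<le> 16/(1 - norm q)^3 * ((4*(8/(1 - norm q)^4))^k * norm q^(k^2))"
proof -
  define r where "r = 1 - norm q"
  define B where "B = 8/r^4"
  have r: "0 < r" using q by (simp add: r_def)
  have B: "0 \<le> B" using r by (simp add: B_def)
  have N1: "norm (q^(2*n)) \<le> 1" by (rule norm_qpow_le1[OF q(2)])
  have a: "norm ((1 - q^(4*k+1))/(1-q)) \<le> 2/r"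
  proof -
    have "norm ((1 - q^(4*k+1))/(1-q)) = norm (1 - q^(4*k+1)) / norm (1-q)" by (simp add: norm_divide)
    also have "\<dots> \<le> 2/r"
      by (intro frac_le norm_1m_le2[OF q(2)]) (use r norm_1m_ge[OF q(2), of 1 1] in \<open>auto simp: r_def\<close>)
    finally show ?thesis .
  qed
  have t: "norm (tau q 0 (q^(2*n)) k) \<le> B^k * norm q^(k^2)"
    using tau_bound[OF q(2) N1] by (simp add: B_def r_def)
  have v: "norm (nu q (q^(2*n)) k) \<le> 2^k" by (rule nu_bound[OF q])
  have sl: "norm (SL q k) \<le> real k * (2/r^2)" using SL_bound[OF q(2)] by (simp add: r_def)
  have e: "norm ((1-q)^2) \<le> 4"
  proof -
    have "norm (1-q) \<le> 2" using norm_1m_le2[OF q(2), of 1] by simp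
    then have "norm (1-q)^2 \<le> 2^2" by (intro power_mono) auto
    then show ?thesis by (simp add: norm_power)
  qed
  have "norm (TT q 0 (q^(2*n)) k * SL q k * (1-q)^2)
      = norm ((1 - q^(4*k+1))/(1-q)) * norm (tau q 0 (q^(2*n)) k) * norm (nu q (q^(2*n)) k) * norm (SL q k) * norm ((1-q)^2)"
    unfolding TT_def norm_mult ..
  also have "\<dots> \<le> (2/r) * (B^k * norm q^(k^2)) * 2^k * (real k * (2/r^2)) * 4"
    by (intro mult_mono a t v sl e) (use r B in auto)
  also have "\<dots> \<le> (2/r) * (B^k * norm q^(k^2)) * 2^k * (2^k * (2/r^2)) * 4"
  proof -
    have "real k \<le> 2^k"
    proof -
      have "k < 2^k" by (rule less_exp)
      then have "real k < real (2^k)" by linarith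
      then show ?thesis by simp
    qed
    then show ?thesis by (intro mult_right_mono mult_left_mono) (use r B in auto)
  qed
  also have "\<dots> = 16/r^3 * ((4*B)^k * norm q^(k^2))"
    using r power_mult_distrib[of "2::real" 2 k] by (simp add: power_mult_distrib field_simps power2_eq_square power3_eq_cube)
  finally show ?thesis by (simp add: r_def B_def)
qed

lemma summable_M:
  assumes q: "norm (q::complex) < 1" and that: "0 \<le> (D::real)"
  shows "summable (\<lambda>k. C * (D^k * norm q^(k^2)))"
proof -
  have "(\<lambda>k. D * norm q^k) \<longlonglongrightarrow> D * 0"
    by (intro tendsto_intros) (use q in simp)
  then have "eventually (\<lambda>k. D * norm q^k < 1/2) sequentially"
    by (intro order_tendstoD(2)) auto
  then have ev: "eventually (\<lambda>k. norm (D^k * norm q^(k^2)) \<le> (1/2)^k) sequentially"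
  proof (rule eventually_mono)
    fix k assume k: "D * norm q^k < 1/2"
    have "D^k * norm q^(k^2) = (D * norm q^k)^k"
      by (simp add: power_mult_distrib power2_eq_square power_mult[symmetric] mult.commute)
    also have "\<dots> \<le> (1/2)^k" by (rule power_mono) (use k that in auto)
    finally show "norm (D^k * norm q^(k^2)) \<le> (1/2)^k" using that by simp
  qed
  have "summable (\<lambda>k. D^k * norm q^(k^2))"
    by (rule summable_comparison_test_ev[OF ev]) (rule summable_geometric, simp)
  then show ?thesis by (rule summable_mult)
qed

lemma main_limit:
  assumes q: "q \<noteq> 0" "norm q < 1"
  shows "summable (\<lambda>k. TT q 0 0 k * SL q k * (1-q)^2)
    \<and> (\<Sum>k. TT q 0 0 k * SL q k * (1-q)^2) =
       qpoch_inf q (q ^ 2) * qpoch_inf (q ^ 3) (q ^ 2) / (qpoch_inf (q ^ 2) (q ^ 2)) ^ 2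
            * (\<Sum>j. if j = 0 then 0 else q ^ (2 * j) / (qint q (2 * j)) ^ 2)"
proof -
  define A where "A = (\<lambda>k n. TT q 0 (q^(2*n)) k * SL q k * (1-q)^2)"
  define b where "b = (\<lambda>k. TT q 0 0 k * SL q k * (1-q)^2)"
  define M where "M = (\<lambda>k::nat. 16/(1 - norm q)^3 * ((4*(8/(1 - norm q)^4))^k * norm q^(k^2)))"
  define f where "f = (\<lambda>j::nat. if j = 0 then 0 else q ^ (2 * j) / (qint q (2 * j)) ^ 2)"
  define P where "P = qpoch_inf q (q ^ 2) * qpoch_inf (q ^ 3) (q ^ 2) / (qpoch_inf (q ^ 2) (q ^ 2)) ^ 2"
  have lim: "\<And>k. ((\<lambda>n. A k n) \<longlonglongrightarrow> b k)"
    unfolding A_def b_def by (intro tendsto_intros lim_TT[OF q])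
  have bnd: "\<And>k n. norm (A k n) \<le> M k" unfolding A_def M_def by (rule term_bound[OF q])
  have bound: "eventually (\<lambda>(k,n). norm (A k n) \<le> M k) (at_top \<times>\<^sub>F sequentially)"
    by (rule always_eventually) (auto simp: bnd)
  have sM: "summable M" unfolding M_def
    by (rule summable_M[OF q(2)]) (use q in simp)
  from tannerys_theorem[OF lim bound sM]
  have T: "summable (\<lambda>k. norm (b k))" "(\<lambda>n. suminf (\<lambda>k. A k n)) \<longlonglongrightarrow> suminf b" by auto
  have "suminf (\<lambda>k. A k n) = (\<Prod>i<n. gm q 0 (q^(2*i))) * ((1-q)^2 * SR q n)" for n
  proof -
    have "suminf (\<lambda>k. A k n) = (\<Sum>k\<in>{..n}. A k n)"
    proof (rule suminf_finite)
      fix k assume "k \<notin> {..n}"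
      then have "n < k" by simp
      then show "A k n = 0" using nu_zero[OF q(1)] by (simp add: A_def TT_def)
    qed simp
    also have "\<dots> = (\<Sum>k\<le>n. TT q 0 (q^(2*n)) k * SL q k) * (1-q)^2"
      by (simp add: A_def sum_distrib_right)
    also have "\<dots> = ((\<Prod>i<n. gm q 0 (q^(2*i))) * SR q n) * (1-q)^2"
      by (simp only: fin_id[OF q])
    also have "\<dots> = (\<Prod>i<n. gm q 0 (q^(2*i))) * ((1-q)^2 * SR q n)"
      by (simp add: mult_ac)
    finally show ?thesis .
  qed
  moreover have "(\<lambda>n. (\<Prod>i<n. gm q 0 (q^(2*i))) * ((1-q)^2 * SR q n)) \<longlonglongrightarrow> P * suminf f"
  proof (intro tendsto_intros)
    show "(\<lambda>n. \<Prod>i<n. gm q 0 (q^(2*i))) \<longlonglongrightarrow> P" unfolding P_def by (rule gm_prod_lim[OF q])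
    have sf: "summable f" unfolding f_def by (rule summable_rhs[OF q(2)])
    have "(\<lambda>n. \<Sum>j<Suc n. f j) \<longlonglongrightarrow> suminf f"
      by (rule LIMSEQ_Suc[OF summable_LIMSEQ[OF sf]])
    then show "(\<lambda>n. (1-q)^2 * SR q n) \<longlonglongrightarrow> suminf f"
      by (simp add: SR_eq[OF q(2)] f_def)
  qed
  ultimately have "(\<lambda>n. suminf (\<lambda>k. A k n)) \<longlonglongrightarrow> P * suminf f" by simp
  with T(2) have "suminf b = P * suminf f" by (rule LIMSEQ_unique)
  moreover have "summable b" by (rule summable_norm_cancel[OF T(1)])
  ultimately show ?thesis unfolding b_def P_def f_def by simp
qed

theorem theorem1p4:
  fixes q :: complex
  assumes "0 < norm q" and "norm q < 1"
  shows "summable (\<lambda>j::nat. if j = 0 then 0 else q ^ (2 * j) / (qint q (2 * j)) ^ 2)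
    \<and> (\<lambda>k::nat. if k = 0 then 0 else
          (-1) ^ k * q ^ (k ^ 2) * qint q (4 * k + 1)
          * (qpoch q (q ^ 2) k) ^ 3 / (qpoch (q ^ 2) (q ^ 2) k) ^ 3
          * (\<Sum>i = 1..2 * k. (-1) ^ i * q ^ i / (qint q i) ^ 2))
      sums (qpoch_inf q (q ^ 2) * qpoch_inf (q ^ 3) (q ^ 2) / (qpoch_inf (q ^ 2) (q ^ 2)) ^ 2
            * (\<Sum>j. if j = 0 then 0 else q ^ (2 * j) / (qint q (2 * j)) ^ 2))"
proof -
  have q: "q \<noteq> 0" "norm q < 1" using assms by auto
  have eq: "(\<lambda>k::nat. if k = 0 then 0 else
          (-1) ^ k * q ^ (k ^ 2) * qint q (4 * k + 1)
          * (qpoch q (q ^ 2) k) ^ 3 / (qpoch (q ^ 2) (q ^ 2) k) ^ 3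
          * (\<Sum>i = 1..2 * k. (-1) ^ i * q ^ i / (qint q i) ^ 2))
      = (\<lambda>k. TT q 0 0 k * SL q k * (1-q)^2)"
  proof
    fix k :: nat
    show "(if k = 0 then 0 else
          (-1) ^ k * q ^ (k ^ 2) * qint q (4 * k + 1)
          * (qpoch q (q ^ 2) k) ^ 3 / (qpoch (q ^ 2) (q ^ 2) k) ^ 3
          * (\<Sum>i = 1..2 * k. (-1) ^ i * q ^ i / (qint q i) ^ 2))
      = TT q 0 0 k * SL q k * (1-q)^2"
    proof (cases "k = 0")
      case True then show ?thesis by (simp add: SL_def)
    next
      case False then show ?thesis
        unfolding SL_eq[OF q(2), symmetric] TT00[OF q(2)] by (simp add: mult_ac)
    qed
  qed
  from main_limit[OF q] have m: "summable (\<lambda>k. TT q 0 0 k * SL q k * (1-q)^2)"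
    "(\<Sum>k. TT q 0 0 k * SL q k * (1-q)^2) = qpoch_inf q (q ^ 2) * qpoch_inf (q ^ 3) (q ^ 2) / (qpoch_inf (q ^ 2) (q ^ 2)) ^ 2
            * (\<Sum>j. if j = 0 then 0 else q ^ (2 * j) / (qint q (2 * j)) ^ 2)" by auto
  show ?thesis
    unfolding eq using summable_rhs[OF q(2)] summable_sums[OF m(1)] m(2) by simp
qed

end
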